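(* Let $H$ be a real symmetric $n\times n$ matrix and $t_0\in\mathbb{R}$ such that $|\langle 1|e^{it_0H}|2\rangle|=1$. Then there exist $\theta\in\mathbb{R}$, integers $0\le \ell\le m\le n$, a real orthogonal matrix $\tilde Q$, and a real diagonal matrix \[ \tilde D=\pi\,\mathrm{diag}(r_1,\dots,r_\ell,r_{\ell+1},\dots,r_m,r_{m+1},\dots,r_n) \] with $r_1\ge\cdots\ge r_\ell$ positive even integers, $r_{\ell+1}\ge\cdots\ge r_m$ positive odd integers (and $r_{m+1},\dots,r_n$ real), such that $t_0H=\tilde Q^T\tilde D\tilde Q+\theta I$, and such that the first two rows of $\tilde Q^T$ have the form $(x_1,\dots,x_m,0,\dots,0)$ and $(x_1,\dots,x_\ell,-x_{\ell+1},\dots,-x_m,0,\dots,0)$ respectively, with $x_1,\dots,x_m\ge 0$.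
   Context: $\langle 1|M|2\rangle$ denotes the $(1,2)$ entry of a matrix $M$. *)

theory Defs
  imports Complex_Main "Jordan_Normal_Form.Matrix"
begin

definition mat_exp :: "complex mat \<Rightarrow> complex mat" where
  "mat_exp A = mat (dim_row A) (dim_col A) (\<lambda>(i,j). \<Sum>k. (A ^\<^sub>m k) $$ (i,j) / of_nat (fact k))"

end

theory Submission
  imports Defs "Jordan_Normal_Form.Char_Poly"
begin


declare sum.lessThan_Suc[simp del]

lemma vec_nonzero_sq:
  fixes v :: "real vec"
  assumes v: "v \<in> carrier_vec n" "v \<noteq> 0\<^sub>v n"
  shows "v \<bullet> v > 0"
proof -
  obtain i where i: "i < n" "v $ i \<noteq> 0" using v by (metis eq_vecI carrier_vecD index_zero_vec)
  have "v \<bullet> v = (\<Sum>k\<in>{0..<n}. v$k * v$k)" using v by (simp add: scalar_prod_def)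
  also have "\<dots> > 0" by (rule sum_pos2[of _ i]) (use i in \<open>auto simp: zero_less_mult_iff linorder_neq_iff\<close>)
  finally show ?thesis .
qed

lemma real_eigvec:
  fixes A :: "real mat"
  assumes A: "A \<in> carrier_mat (Suc n) (Suc n)" and sym: "transpose_mat A = A"
  shows "\<exists>lam v. v \<in> carrier_vec (Suc n) \<and> A *\<^sub>v v = lam \<cdot>\<^sub>v v \<and> v \<bullet> v = 1"
proof -
  let ?C = "map_mat complex_of_real A"
  have C: "?C \<in> carrier_mat (Suc n) (Suc n)" using A by auto
  have "degree (char_poly ?C) = Suc n" using degree_monic_char_poly[OF C] by auto
  then obtain z where z: "poly (char_poly ?C) z = 0"
    using fundamental_theorem_of_algebra constant_degree by (metis nat.distinct(1))
  hence "eigenvalue ?C z" using eigenvalue_root_char_poly[OF C] by simp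
  then obtain u where u: "u \<in> carrier_vec (Suc n)" "u \<noteq> 0\<^sub>v (Suc n)" "?C *\<^sub>v u = z \<cdot>\<^sub>v u"
    unfolding eigenvalue_def eigenvector_def using C by auto
  have symA: "\<And>i j. i < Suc n \<Longrightarrow> j < Suc n \<Longrightarrow> A $$ (j,i) = A $$ (i,j)"
    using sym A by (metis carrier_matD index_transpose_mat(1))
  define S where "S = (\<Sum>i<Suc n. \<Sum>j<Suc n. cnj (u$i) * of_real (A$$(i,j)) * u$j)"
  have row: "(\<Sum>j<Suc n. of_real (A$$(i,j)) * u$j) = z * u$i" if i: "i < Suc n" for i
  proof -
    have "(?C *\<^sub>v u) $ i = z * u $ i" using u(3) i u(1) by simp
    moreover have "(?C *\<^sub>v u) $ i = (\<Sum>j<Suc n. of_real (A$$(i,j)) * u$j)"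
      using i u(1) A by (simp add: scalar_prod_def row_def atLeast0LessThan)
    ultimately show ?thesis by simp
  qed
  define N where "N = (\<Sum>i<Suc n. (cmod (u$i))^2)"
  have S1: "S = z * of_real N"
  proof -
    have "S = (\<Sum>i<Suc n. cnj (u$i) * (\<Sum>j<Suc n. of_real (A$$(i,j)) * u$j))"
      unfolding S_def sum_distrib_left by (simp add: mult.assoc del: sum.lessThan_Suc)
    also have "\<dots> = (\<Sum>i<Suc n. z * (cnj (u$i) * u$i))" by (intro sum.cong refl) (simp add: row)
    also have "\<dots> = z * of_real N" unfolding N_def
      unfolding of_real_sum sum_distrib_left
      by (intro sum.cong refl) (metis complex_norm_square mult.commute)
    finally show ?thesis .
  qed
  have S2: "cnj S = S"
  proof -
    have "cnj S = (\<Sum>i<Suc n. \<Sum>j<Suc n. u$i * of_real (A$$(i,j)) * cnj (u$j))"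
      unfolding S_def by (simp add: cnj_sum)
    also have "\<dots> = (\<Sum>j<Suc n. \<Sum>i<Suc n. u$i * of_real (A$$(i,j)) * cnj (u$j))"
      by (rule sum.swap)
    also have "\<dots> = S" unfolding S_def
      by (intro sum.cong refl) (simp add: symA mult.commute mult.left_commute)
    finally show ?thesis .
  qed
  have Npos: "N > 0"
  proof -
    obtain i where i: "i < Suc n" "u $ i \<noteq> 0" using u by (metis eq_vecI carrier_vecD index_zero_vec)
    show ?thesis unfolding N_def by (rule sum_pos2[of _ i]) (use i in auto)
  qed
  have zr: "z = of_real (Re z)"
  proof -
    have "cnj z * of_real N = z * of_real N" using S1 S2 by (metis complex_cnj_complex_of_real complex_cnj_mult)
    hence "cnj z = z" using Npos by simp
    thus ?thesis by (metis Reals_cnj_iff of_real_Re)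
  qed
  have "of_real (poly (char_poly A) (Re z)) = (0::complex)"
    using z zr of_real_hom.char_poly_hom[OF A] of_real_hom.poly_map_poly by metis
  hence "eigenvalue A (Re z)" using eigenvalue_root_char_poly[OF A] by simp
  then obtain w where w: "w \<in> carrier_vec (Suc n)" "w \<noteq> 0\<^sub>v (Suc n)" "A *\<^sub>v w = Re z \<cdot>\<^sub>v w"
    unfolding eigenvalue_def eigenvector_def using A by auto
  have wp: "w \<bullet> w > 0" by (rule vec_nonzero_sq[OF w(1,2)])
  define c where "c = 1 / sqrt (w \<bullet> w)"
  let ?v = "c \<cdot>\<^sub>v w"
  have "A *\<^sub>v ?v = Re z \<cdot>\<^sub>v ?v" using w A
    by (metis carrier_matD(2) carrier_vecD mult_mat_vec smult_smult_assoc mult.commute)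
  moreover have "?v \<bullet> ?v = 1" using wp w(1) unfolding c_def
    by (simp add: smult_scalar_prod_distrib scalar_prod_smult_distrib power2_eq_square[symmetric])
  ultimately show ?thesis using w(1) by (intro exI[of _ "Re z"] exI[of _ ?v]) auto
qed

lemma mult_entry:
  assumes "A \<in> carrier_mat n k" "B \<in> carrier_mat k m" "i < n" "j < m"
  shows "(A * B) $$ (i,j) = (\<Sum>c<k. A$$(i,c) * B$$(c,j))"
  using assms by (simp add: scalar_prod_def atLeast0LessThan)

lemma householder:
  fixes f :: "nat \<Rightarrow> real"
  assumes N: "N > 0" and f: "(\<Sum>k<N. (f k)^2) = 1"
  shows "\<exists>P. P \<in> carrier_mat N N \<and> P * transpose_mat P = 1\<^sub>m N \<and> transpose_mat P * P = 1\<^sub>m N \<and>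
            (\<forall>j<N. P$$(0,j) = f j)"
proof (cases "f 0 = 1")
  case True
  have "(\<Sum>k<N. (f k)^2) = (f 0)^2 + (\<Sum>k\<in>{..<N}-{0}. (f k)^2)"
    using N by (subst sum.remove[of _ 0]) auto
  hence "(\<Sum>k\<in>{..<N}-{0}. (f k)^2) = 0" using f True by simp
  hence "\<forall>k\<in>{..<N}-{0}. (f k)^2 = 0" by (subst (asm) sum_nonneg_eq_0_iff) auto
  hence z: "\<And>k. k < N \<Longrightarrow> k \<noteq> 0 \<Longrightarrow> f k = 0" by auto
  show ?thesis using True z N by (intro exI[of _ "1\<^sub>m N"]) auto
next
  case False
  define w where "w k = f k - (if k = 0 then 1 else 0)" for k
  define c where "c = 1 / (1 - f 0)"
  have ww: "(\<Sum>k<N. w k * w k) = 2 - 2 * f 0"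
  proof -
    have "(\<Sum>k<N. w k * w k) = (\<Sum>k<N. (f k)^2) - (\<Sum>k<N. (if k = 0 then 2 * f k - 1 else 0))"
      unfolding w_def by (subst sum_subtractf[symmetric]) (intro sum.cong refl, auto simp: power2_eq_square algebra_simps)
    also have "\<dots> = 2 - 2 * f 0" using f N by (simp add: sum.delta')
    finally show ?thesis .
  qed
  have c1: "c * (1 - f 0) = 1" using False unfolding c_def by simp
  have "c * c * (2 - 2 * f 0) = 2 * c * (c * (1 - f 0))" by (simp add: algebra_simps)
  hence cw: "c * c * (2 - 2 * f 0) = 2 * c" using c1 by simp
  define P where "P = mat N N (\<lambda>(i,j). (if i = j then 1 else 0) - c * w i * w j)"
  have PC: "P \<in> carrier_mat N N" unfolding P_def by simp
  have PT: "transpose_mat P = P" unfolding P_def by (rule eq_matI) auto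
  have PP: "P * P = 1\<^sub>m N"
  proof (rule eq_matI)
    fix i j assume ij: "i < dim_row (1\<^sub>m N)" "j < dim_col (1\<^sub>m N)"
    hence i: "i < N" and j: "j < N" by auto
    have "(P * P) $$ (i,j) = (\<Sum>k<N. ((if i = k then 1 else 0) - c * w i * w k) * ((if k = j then 1 else 0) - c * w k * w j))"
      by (subst mult_entry[OF PC PC i j]) (intro sum.cong refl, simp add: P_def i j)
    also have "\<dots> = (\<Sum>k<N. (if k = i then (if k = j then 1 else 0) else 0) - (if k = i then c * w k * w j else 0)
        - (if k = j then c * w i * w k else 0) + c * c * w i * w j * (w k * w k))"
      by (intro sum.cong refl) (auto simp: algebra_simps)
    also have "\<dots> = (\<Sum>k<N. (if k = i then (if k = j then 1 else 0) else 0)) - (\<Sum>k<N. (if k = i then c * w k * w j else 0))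
        - (\<Sum>k<N. (if k = j then c * w i * w k else 0)) + c * c * w i * w j * (\<Sum>k<N. w k * w k)"
      by (simp only: sum.distrib sum_subtractf sum_distrib_left)
    also have "\<dots> = (if i = j then 1 else 0) - 2 * c * w i * w j + c * c * w i * w j * (2 - 2 * f 0)"
      using i j by (simp add: sum.delta sum.delta' ww)
    also have "\<dots> = (if i = j then 1 else 0) - 2 * c * w i * w j + (c * c * (2 - 2 * f 0)) * (w i * w j)"
      by (simp add: algebra_simps)
    also have "\<dots> = 1\<^sub>m N $$ (i,j)" using i j unfolding cw by (simp add: algebra_simps)
    finally show "(P * P) $$ (i,j) = 1\<^sub>m N $$ (i,j)" .
  qed (simp_all add: P_def)
  have row0: "P$$(0,j) = f j" if j: "j < N" for j
  proof -
    have "c * w 0 = -1" unfolding c_def w_def using False by (simp add: field_simps)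
    moreover have "P$$(0,j) = (if 0 = j then 1 else 0) - (c * w 0) * w j" unfolding P_def using j N
      by (simp add: mult.assoc)
    ultimately have "P$$(0,j) = (if 0 = j then 1 else 0) + w j" by simp
    thus ?thesis unfolding w_def by auto
  qed
  show ?thesis using PC row0 by (intro exI[of _ P]) (simp add: PT PP)
qed

lemma sandwich_entry:
  assumes Q: "Q \<in> carrier_mat n n" and a: "a < n" and b: "b < n"
  shows "(transpose_mat Q * mat_diag n f * Q) $$ (a,b) = (\<Sum>j<n. Q$$(j,a) * f j * Q$$(j,b))"
proof -
  have QT: "transpose_mat Q \<in> carrier_mat n n" using Q by simp
  have "transpose_mat Q * mat_diag n f = mat n n (\<lambda>(i,j). transpose_mat Q $$ (i,j) * f j)"
    by (rule mat_diag_mult_right[OF QT])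
  also have "\<dots> = mat n n (\<lambda>(i,j). Q $$ (j,i) * f j)" using Q by (intro eq_matI) auto
  finally have e: "transpose_mat Q * mat_diag n f = mat n n (\<lambda>(i,j). Q $$ (j,i) * f j)" .
  show ?thesis unfolding e by (subst mult_entry[OF _ Q a b]) (auto simp: a intro!: sum.cong)
qed

lemma TQ_entry:
  assumes Q: "Q \<in> carrier_mat n n" and a: "a < n" and b: "b < n"
  shows "(transpose_mat Q * Q) $$ (a,b) = (\<Sum>j<n. Q$$(j,a) * Q$$(j,b))"
  using Q a b by (subst mult_entry[of _ n n _ n]) auto

lemma QT_entry:
  assumes Q: "Q \<in> carrier_mat n n" and a: "a < n" and b: "b < n"
  shows "(Q * transpose_mat Q) $$ (a,b) = (\<Sum>j<n. Q$$(a,j) * Q$$(b,j))"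
  using Q a b by (subst mult_entry[of _ n n _ n]) auto

lemma orth_mult:
  fixes A B :: "'a::comm_ring_1 mat"
  assumes A: "A \<in> carrier_mat n n" and B: "B \<in> carrier_mat n n"
    and "transpose_mat A * A = 1\<^sub>m n" "A * transpose_mat A = 1\<^sub>m n"
    and "transpose_mat B * B = 1\<^sub>m n" "B * transpose_mat B = 1\<^sub>m n"
  shows "transpose_mat (A * B) * (A * B) = 1\<^sub>m n \<and> (A * B) * transpose_mat (A * B) = 1\<^sub>m n"
proof -
  have AT: "transpose_mat A \<in> carrier_mat n n" and BT: "transpose_mat B \<in> carrier_mat n n" using A B by auto
  have t: "transpose_mat (A * B) = transpose_mat B * transpose_mat A" using A B by (simp add: transpose_mult)
  have "transpose_mat B * transpose_mat A * (A * B) = transpose_mat B * ((transpose_mat A * A) * B)"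
    using A B AT BT by (simp add: assoc_mult_mat[of _ n n _ n _ n])
  also have "\<dots> = 1\<^sub>m n" using assms B BT by simp
  finally have 1: "transpose_mat B * transpose_mat A * (A * B) = 1\<^sub>m n" .
  have "A * B * (transpose_mat B * transpose_mat A) = A * ((B * transpose_mat B) * transpose_mat A)"
    using A B AT BT by (simp add: assoc_mult_mat[of _ n n _ n _ n])
  also have "\<dots> = 1\<^sub>m n" using assms A AT by simp
  finally have 2: "A * B * (transpose_mat B * transpose_mat A) = 1\<^sub>m n" .
  show ?thesis using 1 2 t by simp
qed

lemma spectral:
  fixes A :: "real mat"
  assumes "A \<in> carrier_mat n n" "transpose_mat A = A"
  shows "\<exists>Q mu. Q \<in> carrier_mat n n \<and> transpose_mat Q * Q = 1\<^sub>m n \<and> Q * transpose_mat Q = 1\<^sub>m n \<and>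
            A = transpose_mat Q * mat_diag n mu * Q"
  using assms
proof (induction n arbitrary: A)
  case 0
  show ?case by (intro exI[of _ "1\<^sub>m 0"] exI[of _ "\<lambda>_. 0"]) (use 0 in \<open>auto intro!: eq_matI\<close>)
next
  case (Suc n)
  note AC = Suc.prems(1)
  have symA: "\<And>i j. i < Suc n \<Longrightarrow> j < Suc n \<Longrightarrow> A $$ (j,i) = A $$ (i,j)"
    using Suc.prems by (metis carrier_matD index_transpose_mat(1))
  obtain lam v where v: "v \<in> carrier_vec (Suc n)" "A *\<^sub>v v = lam \<cdot>\<^sub>v v" "v \<bullet> v = 1"
    using real_eigvec[OF Suc.prems] by blast
  have "(\<Sum>k<Suc n. (v$k)^2) = 1" using v by (simp add: scalar_prod_def atLeast0LessThan power2_eq_square)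
  then obtain P where P: "P \<in> carrier_mat (Suc n) (Suc n)" "P * transpose_mat P = 1\<^sub>m (Suc n)"
     "transpose_mat P * P = 1\<^sub>m (Suc n)" "\<And>j. j < Suc n \<Longrightarrow> P$$(0,j) = v$j"
    using householder[of "Suc n" "\<lambda>k. v$k"] by auto
  have PT: "transpose_mat P \<in> carrier_mat (Suc n) (Suc n)" using P by simp
  define B where "B = P * A * transpose_mat P"
  have BC: "B \<in> carrier_mat (Suc n) (Suc n)" unfolding B_def using P AC by auto
  have Av: "(\<Sum>a<Suc n. v$a * A$$(a,k)) = lam * v$k" if k: "k < Suc n" for k
  proof -
    have "(A *\<^sub>v v) $ k = lam * v $ k" using v k by simp
    moreover have "(A *\<^sub>v v) $ k = (\<Sum>a<Suc n. A$$(k,a) * v$a)"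
      using k v(1) AC by (simp add: scalar_prod_def row_def atLeast0LessThan)
    ultimately show ?thesis using symA k by (simp add: mult.commute)
  qed
  have PA0: "(P * A) $$ (0,k) = lam * v$k" if k: "k < Suc n" for k
    using mult_entry[OF P(1) AC _ k, of 0] Av[OF k] P(4) by simp
  have B0: "B $$ (0,j) = (if j = 0 then lam else 0)" if j: "j < Suc n" for j
  proof -
    have "B $$ (0,j) = (\<Sum>k<Suc n. (P * A) $$ (0,k) * transpose_mat P $$ (k,j))"
      unfolding B_def by (rule mult_entry[OF _ PT]) (use P AC j in auto)
    also have "\<dots> = lam * (\<Sum>k<Suc n. P $$ (0,k) * P $$ (j,k))"
      unfolding sum_distrib_left using P(1) j by (intro sum.cong refl) (simp add: PA0 P(4))
    also have "\<dots> = lam * (P * transpose_mat P) $$ (0,j)" by (simp add: QT_entry[OF P(1) _ j])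
    also have "\<dots> = (if j = 0 then lam else 0)" using P(2) j by simp
    finally show ?thesis .
  qed
  have BT: "transpose_mat B = B"
    unfolding B_def using P AC Suc.prems(2)
    by (simp add: transpose_mult[of _ "Suc n" "Suc n" _ "Suc n"] assoc_mult_mat[of _ "Suc n" "Suc n" _ "Suc n" _ "Suc n"])
  have symB: "\<And>i j. i < Suc n \<Longrightarrow> j < Suc n \<Longrightarrow> B $$ (j,i) = B $$ (i,j)"
    using BT BC by (metis carrier_matD index_transpose_mat(1))
  define B' where "B' = mat n n (\<lambda>(i,j). B $$ (Suc i, Suc j))"
  have B'C: "B' \<in> carrier_mat n n" unfolding B'_def by simp
  have B'T: "transpose_mat B' = B'" unfolding B'_def using symB by (intro eq_matI) auto
  obtain R mu where R: "R \<in> carrier_mat n n" "transpose_mat R * R = 1\<^sub>m n" "R * transpose_mat R = 1\<^sub>m n"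
    "B' = transpose_mat R * mat_diag n mu * R" using Suc.IH[OF B'C B'T] by blast
  define R1 where "R1 = mat (Suc n) (Suc n) (\<lambda>(i,j). if i = 0 then (if j = 0 then 1 else 0) else if j = 0 then 0 else R$$(i-1,j-1))"
  define mu1 where "mu1 j = (if j = 0 then lam else mu (j-1))" for j
  have R1C: "R1 \<in> carrier_mat (Suc n) (Suc n)" unfolding R1_def by simp
  have R1e: "R1 $$ (0,0) = 1" "\<And>b. b < n \<Longrightarrow> R1 $$ (0, Suc b) = 0" "\<And>a. a < n \<Longrightarrow> R1 $$ (Suc a, 0) = 0"
     "\<And>a b. a < n \<Longrightarrow> b < n \<Longrightarrow> R1 $$ (Suc a, Suc b) = R $$ (a,b)" unfolding R1_def by auto
  have Bd: "B = transpose_mat R1 * mat_diag (Suc n) mu1 * R1"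
  proof (rule eq_matI)
    fix a b assume "a < dim_row (transpose_mat R1 * mat_diag (Suc n) mu1 * R1)" "b < dim_col (transpose_mat R1 * mat_diag (Suc n) mu1 * R1)"
    hence a: "a < Suc n" and b: "b < Suc n" using R1C by auto
    have e: "(transpose_mat R1 * mat_diag (Suc n) mu1 * R1) $$ (a,b) =
       R1$$(0,a) * lam * R1$$(0,b) + (\<Sum>j<n. R1$$(Suc j,a) * mu j * R1$$(Suc j,b))"
      by (simp add: sandwich_entry[OF R1C a b] sum.lessThan_Suc_shift mu1_def)
    show "B $$ (a,b) = (transpose_mat R1 * mat_diag (Suc n) mu1 * R1) $$ (a,b)"
    proof (cases a)
      case 0
      then show ?thesis
      proof (cases b)
        case 0 thus ?thesis using \<open>a = 0\<close> e B0[of 0] R1e by simp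
      next
        case (Suc b') thus ?thesis using \<open>a = 0\<close> e B0[OF b] R1e b by simp
      qed
    next
      case (Suc a')
      then show ?thesis
      proof (cases b)
        case 0 thus ?thesis using \<open>a = Suc a'\<close> e B0[OF a] symB[OF a b] R1e a by simp
      next
        case (Suc b')
        have "B $$ (a,b) = B' $$ (a',b')" using \<open>a = Suc a'\<close> Suc a b unfolding B'_def by simp
        also have "\<dots> = (\<Sum>j<n. R$$(j,a') * mu j * R$$(j,b'))"
          using R(4) sandwich_entry[OF R(1), of a' b' mu] \<open>a = Suc a'\<close> Suc a b by simp
        finally show ?thesis using \<open>a = Suc a'\<close> Suc a b e R1e by simp
      qed
    qed
  qed (use R1C BC in auto)
  have R1o: "transpose_mat R1 * R1 = 1\<^sub>m (Suc n)"
  proof (rule eq_matI)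
    fix a b assume "a < dim_row (1\<^sub>m (Suc n))" "b < dim_col (1\<^sub>m (Suc n))"
    hence a: "a < Suc n" and b: "b < Suc n" by auto
    have e: "(transpose_mat R1 * R1) $$ (a,b) = R1$$(0,a) * R1$$(0,b) + (\<Sum>j<n. R1$$(Suc j,a) * R1$$(Suc j,b))"
      by (simp add: TQ_entry[OF R1C a b] sum.lessThan_Suc_shift)
    show "(transpose_mat R1 * R1) $$ (a,b) = 1\<^sub>m (Suc n) $$ (a,b)"
    proof (cases a)
      case 0 thus ?thesis using e a b R1e by (cases b) auto
    next
      case (Suc a')
      then show ?thesis
      proof (cases b)
        case 0 thus ?thesis using Suc e a b R1e by simp
      next
        case (Suc b')
        have "(\<Sum>j<n. R$$(j,a') * R$$(j,b')) = (transpose_mat R * R) $$ (a',b')"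
          using TQ_entry[OF R(1), of a' b'] \<open>a = Suc a'\<close> Suc a b by simp
        thus ?thesis using \<open>a = Suc a'\<close> Suc a b e R1e R(2) by simp
      qed
    qed
  qed (use R1C in auto)
  have R1o': "R1 * transpose_mat R1 = 1\<^sub>m (Suc n)"
  proof (rule eq_matI)
    fix a b assume "a < dim_row (1\<^sub>m (Suc n))" "b < dim_col (1\<^sub>m (Suc n))"
    hence a: "a < Suc n" and b: "b < Suc n" by auto
    have e: "(R1 * transpose_mat R1) $$ (a,b) = R1$$(a,0) * R1$$(b,0) + (\<Sum>j<n. R1$$(a,Suc j) * R1$$(b,Suc j))"
      by (simp add: QT_entry[OF R1C a b] sum.lessThan_Suc_shift)
    show "(R1 * transpose_mat R1) $$ (a,b) = 1\<^sub>m (Suc n) $$ (a,b)"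
    proof (cases a)
      case 0 thus ?thesis using e a b R1e by (cases b) auto
    next
      case (Suc a')
      then show ?thesis
      proof (cases b)
        case 0 thus ?thesis using Suc e a b R1e by simp
      next
        case (Suc b')
        have "(\<Sum>j<n. R$$(a',j) * R$$(b',j)) = (R * transpose_mat R) $$ (a',b')"
          using QT_entry[OF R(1), of a' b'] \<open>a = Suc a'\<close> Suc a b by simp
        thus ?thesis using \<open>a = Suc a'\<close> Suc a b e R1e R(3) by simp
      qed
    qed
  qed (use R1C in auto)
  have L: "transpose_mat P * (P * X) = X" if X: "X \<in> carrier_mat (Suc n) (Suc n)" for X
  proof -
    have "transpose_mat P * (P * X) = (transpose_mat P * P) * X"
      by (rule assoc_mult_mat[symmetric]) (use P PT X in auto)
    thus ?thesis using P(3) X by simp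
  qed
  have A2: "A = transpose_mat P * B * P"
    unfolding B_def using P AC PT by (simp add: assoc_mult_mat[of _ "Suc n" "Suc n" _ "Suc n" _ "Suc n"] L)
  have DC: "mat_diag (Suc n) mu1 \<in> carrier_mat (Suc n) (Suc n)" by simp
  have A3: "A = transpose_mat (R1 * P) * mat_diag (Suc n) mu1 * (R1 * P)"
    unfolding A2 Bd using P R1C PT DC
      mult_carrier_mat[OF DC R1C] mult_carrier_mat[OF _ mult_carrier_mat[OF DC R1C], of "transpose_mat R1" "Suc n"]
      mult_carrier_mat[OF R1C P(1)] mult_carrier_mat[OF DC mult_carrier_mat[OF R1C P(1)]]
    by (simp add: transpose_mult[of _ "Suc n" "Suc n" _ "Suc n"] assoc_mult_mat[of _ "Suc n" "Suc n" _ "Suc n" _ "Suc n"])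
  show ?case using orth_mult[OF R1C P(1) R1o R1o' P(3) P(2)] A3 R1C P(1)
    by (intro exI[of _ "R1 * P"] exI[of _ mu1]) auto
qed


lemma exp_entry:
  fixes H Q :: "real mat" and mu :: "nat \<Rightarrow> real"
  assumes H: "H \<in> carrier_mat n n" and Q: "Q \<in> carrier_mat n n"
    and o1: "transpose_mat Q * Q = 1\<^sub>m n" and o2: "Q * transpose_mat Q = 1\<^sub>m n"
    and eq: "t0 \<cdot>\<^sub>m H = transpose_mat Q * mat_diag n mu * Q" and a: "a < n" and b: "b < n"
  shows "mat_exp ((\<i> * complex_of_real t0) \<cdot>\<^sub>m map_mat complex_of_real H) $$ (a,b)
       = (\<Sum>j<n. complex_of_real (Q$$(j,a) * Q$$(j,b)) * exp (\<i> * complex_of_real (mu j)))"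
proof -
  define G where "G = (\<i> * complex_of_real t0) \<cdot>\<^sub>m map_mat complex_of_real H"
  define q where "q i j = complex_of_real (Q$$(i,j))" for i j
  define z where "z j = \<i> * complex_of_real (mu j)" for j
  have GC: "G \<in> carrier_mat n n" unfolding G_def using H by simp
  have orth1: "(\<Sum>j<n. q j c * q j d) = (if c = d then 1 else 0)" if "c < n" "d < n" for c d
  proof -
    have "(\<Sum>j<n. Q$$(j,c) * Q$$(j,d)) = (if c = d then 1 else 0)"
      using TQ_entry[OF Q that] o1 that by simp
    hence "complex_of_real (\<Sum>j<n. Q$$(j,c) * Q$$(j,d)) = (if c = d then 1 else 0)" by simp
    thus ?thesis unfolding q_def by simp
  qed
  have orth2: "(\<Sum>c<n. q j c * q p c) = (if j = p then 1 else 0)" if "j < n" "p < n" for j p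
  proof -
    have "(\<Sum>c<n. Q$$(j,c) * Q$$(p,c)) = (if j = p then 1 else 0)"
      using QT_entry[OF Q that] o2 that by simp
    hence "complex_of_real (\<Sum>c<n. Q$$(j,c) * Q$$(p,c)) = (if j = p then 1 else 0)" by simp
    thus ?thesis unfolding q_def by simp
  qed
  have Gentry: "G $$ (c,d) = (\<Sum>j<n. q j c * z j * q j d)" if c: "c < n" and d: "d < n" for c d
  proof -
    have "(t0 \<cdot>\<^sub>m H) $$ (c,d) = (\<Sum>j<n. Q$$(j,c) * mu j * Q$$(j,d))"
      unfolding eq by (rule sandwich_entry[OF Q c d])
    hence "t0 * H $$ (c,d) = (\<Sum>j<n. Q$$(j,c) * mu j * Q$$(j,d))" using H c d by simp
    hence "complex_of_real (t0 * H $$ (c,d)) = (\<Sum>j<n. complex_of_real (Q$$(j,c) * mu j * Q$$(j,d)))"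
      by simp
    hence "\<i> * complex_of_real (t0 * H $$ (c,d)) = (\<Sum>j<n. q j c * z j * q j d)"
      unfolding q_def z_def by (simp add: ac_simps sum_distrib_left)
    thus ?thesis unfolding G_def using H c d by (simp add: mult.assoc)
  qed
  have pow: "(G ^\<^sub>m k) $$ (c,d) = (\<Sum>j<n. q j c * z j ^ k * q j d)" if c: "c < n" and d: "d < n" for k c d
    using c d
  proof (induction k arbitrary: d)
    case 0
    thus ?case using GC orth1[OF 0(1,2)] by simp
  next
    case (Suc k)
    have "(G ^\<^sub>m Suc k) $$ (c,d) = (\<Sum>e<n. (G ^\<^sub>m k) $$ (c,e) * G $$ (e,d))"
      by (simp only: pow_mat.simps) (rule mult_entry[OF pow_carrier_mat[OF GC] GC Suc(2,3)])
    also have "\<dots> = (\<Sum>e<n. (\<Sum>j<n. q j c * z j ^ k * q j e) * (\<Sum>p<n. q p e * z p * q p d))"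
      using Suc by (intro sum.cong refl) (simp add: Gentry)
    also have "\<dots> = (\<Sum>e<n. \<Sum>j<n. \<Sum>p<n. (q j c * z j ^ k) * (z p * q p d) * (q j e * q p e))"
      unfolding sum_product by (intro sum.cong refl) (simp add: ac_simps)
    also have "\<dots> = (\<Sum>j<n. \<Sum>p<n. \<Sum>e<n. (q j c * z j ^ k) * (z p * q p d) * (q j e * q p e))"
      by (rule trans[OF sum.swap]) (rule sum.cong[OF refl], rule sum.swap)
    also have "\<dots> = (\<Sum>j<n. \<Sum>p<n. (q j c * z j ^ k) * (z p * q p d) * (if j = p then 1 else 0))"
      by (intro sum.cong refl) (simp add: sum_distrib_left[symmetric] orth2)
    also have "\<dots> = (\<Sum>j<n. q j c * z j ^ Suc k * q j d)"
      by (intro sum.cong refl) (simp add: ac_simps if_distrib cong: if_cong)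
    finally show ?case .
  qed
  have sm: "(\<lambda>k. (\<Sum>j<n. q j a * q j b * (z j ^ k / of_nat (fact k)))) sums (\<Sum>j<n. q j a * q j b * exp (z j))"
  proof (rule sums_sum, rule sums_mult)
    fix j
    have "(\<lambda>k. z j ^ k /\<^sub>R fact k) sums exp (z j)" by (rule exp_converges)
    moreover have "(\<lambda>k. z j ^ k /\<^sub>R fact k) = (\<lambda>k. z j ^ k / of_nat (fact k))"
      by (rule ext) (simp add: scaleR_conv_of_real divide_inverse mult.commute)
    ultimately show "(\<lambda>k. z j ^ k / of_nat (fact k)) sums exp (z j)" by simp
  qed
  have "mat_exp G $$ (a,b) = (\<Sum>k. (G ^\<^sub>m k) $$ (a,b) / of_nat (fact k))"
    unfolding mat_exp_def using GC a b by simp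
  also have "\<dots> = (\<Sum>k. (\<Sum>j<n. q j a * q j b * (z j ^ k / of_nat (fact k))))"
    using a b by (simp add: pow sum_divide_distrib ac_simps)
  also have "\<dots> = (\<Sum>j<n. q j a * q j b * exp (z j))" using sm by (rule sums_unique[symmetric])
  finally show ?thesis unfolding G_def q_def z_def by simp
qed


lemma pair_case:
  fixes a b r :: real
  assumes e: "a^2 + b^2 = 2 * a * b * r" and r: "-1 \<le> r" "r \<le> 1"
  shows "(a = 0 \<and> b = 0) \<or> (a = b \<and> a \<noteq> 0 \<and> r = 1) \<or> (a = - b \<and> a \<noteq> 0 \<and> r = -1)"
proof (cases "a * b > 0")
  case True
  have "(a - b)^2 = 2 * (a * b) * (r - 1)" using e by (simp add: power2_eq_square algebra_simps)
  also have "\<dots> \<le> 0" using True r by (simp add: mult_nonneg_nonpos)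
  finally have ab: "a = b" by simp
  hence "a \<noteq> 0" using True by auto
  hence "2 * a^2 = 2 * a^2 * r" using e ab by (simp add: power2_eq_square algebra_simps)
  hence "r = 1" using \<open>a \<noteq> 0\<close> by simp
  thus ?thesis using ab \<open>a \<noteq> 0\<close> by simp
next
  case False
  show ?thesis
  proof (cases "a * b < 0")
    case True
    have "(a + b)^2 = 2 * (a * b) * (r + 1)" using e by (simp add: power2_eq_square algebra_simps)
    also have "\<dots> \<le> 0" using True r by (simp add: mult_nonpos_nonneg)
    finally have ab: "a = - b" by (simp add: add_eq_0_iff)
    hence "a \<noteq> 0" using True by auto
    have bb: "b = - a" using ab by simp
    have e': "a^2 + (-a)^2 = 2 * a * (-a) * r" using e unfolding bb .
    have "a^2 * (2 + 2 * r) = (a^2 + (-a)^2) - 2 * a * (-a) * r" by (simp add: power2_eq_square algebra_simps)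
    hence "a^2 * (2 + 2 * r) = 0" using e' by simp
    hence "r = -1" using \<open>a \<noteq> 0\<close> by simp
    thus ?thesis using ab \<open>a \<noteq> 0\<close> by simp
  next
    case False
    hence "a * b = 0" using \<open>\<not> a * b > 0\<close> by simp
    hence "a^2 + b^2 = 0" using e by simp
    thus ?thesis by (simp add: sum_power2_eq_zero_iff)
  qed
qed

lemma pst_core:
  fixes a b mu :: "nat \<Rightarrow> real"
  assumes sa: "(\<Sum>j<n. (a j)^2) = 1" and sb: "(\<Sum>j<n. (b j)^2) = 1"
    and g: "cmod (\<Sum>j<n. complex_of_real (a j * b j) * exp (\<i> * complex_of_real (mu j))) = 1"
  shows "\<exists>\<theta>. \<forall>j<n. (a j = 0 \<and> b j = 0) \<or>
                 (a j = b j \<and> a j \<noteq> 0 \<and> (\<exists>k::int. mu j - \<theta> = 2 * pi * k)) \<or>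
                 (a j = - b j \<and> a j \<noteq> 0 \<and> (\<exists>k::int. mu j - \<theta> = pi * (2 * k + 1)))"
proof -
  define \<gamma> where "\<gamma> = (\<Sum>j<n. complex_of_real (a j * b j) * exp (\<i> * complex_of_real (mu j)))"
  define \<theta> where "\<theta> = Arg \<gamma>"
  have g0: "\<gamma> \<noteq> 0" using g unfolding \<gamma>_def by auto
  have cg: "cis \<theta> = \<gamma>" unfolding \<theta>_def using cis_Arg[OF g0] g unfolding \<gamma>_def by (simp add: sgn_div_norm)
  define r where "r j = cos (mu j - \<theta>)" for j
  have w: "cnj \<gamma> * exp (\<i> * complex_of_real (mu j)) = cis (mu j - \<theta>)" for j
  proof -
    have "exp (\<i> * complex_of_real (mu j)) = cis (mu j)" by (simp add: cis_conv_exp)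
    hence "cnj \<gamma> * exp (\<i> * complex_of_real (mu j)) = cis (- \<theta>) * cis (mu j)"
      using cg by (simp add: cis_cnj[symmetric])
    also have "\<dots> = cis (mu j - \<theta>)" by (simp add: cis_mult)
    finally show ?thesis .
  qed
  have "\<gamma> * cnj \<gamma> = complex_of_real ((cmod \<gamma>)^2)" by (simp only: complex_norm_square)
  hence gg: "cnj \<gamma> * \<gamma> = 1" using g unfolding \<gamma>_def by (simp add: mult.commute)
  have "cnj \<gamma> * \<gamma> = (\<Sum>j<n. complex_of_real (a j * b j) * (cnj \<gamma> * exp (\<i> * complex_of_real (mu j))))"
    unfolding \<gamma>_def sum_distrib_left by (intro sum.cong refl) (simp only: ac_simps)
  also have "\<dots> = (\<Sum>j<n. complex_of_real (a j * b j) * cis (mu j - \<theta>))" by (simp only: w)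
  finally have "(\<Sum>j<n. complex_of_real (a j * b j) * cis (mu j - \<theta>)) = 1" using gg by simp
  hence "Re (\<Sum>j<n. complex_of_real (a j * b j) * cis (mu j - \<theta>)) = 1" by simp
  hence s1: "(\<Sum>j<n. a j * b j * r j) = 1" unfolding r_def by (simp add: Re_sum)
  have rb: "-1 \<le> r j" "r j \<le> 1" for j unfolding r_def by auto
  define d where "d j = ((a j)^2 + (b j)^2) / 2 - a j * b j * r j" for j
  have dn: "d j \<ge> 0" for j
  proof -
    have dd: "d j = ((a j - b j * r j)^2 + (b j)^2 * (1 - (r j)^2)) / 2" unfolding d_def
      by (simp add: power2_eq_square algebra_simps)
    have "(r j)^2 \<le> 1" using rb[of j] by (simp add: abs_square_le_1)
    hence B: "(b j)^2 * (1 - (r j)^2) \<ge> 0" by (intro mult_nonneg_nonneg) auto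
    show ?thesis unfolding dd using B by (intro divide_nonneg_pos add_nonneg_nonneg) auto
  qed
  have "(\<Sum>j<n. d j) = ((\<Sum>j<n. (a j)^2) + (\<Sum>j<n. (b j)^2)) / 2 - (\<Sum>j<n. a j * b j * r j)"
  proof -
    have "(\<Sum>j<n. d j) = (\<Sum>j<n. ((a j)^2 + (b j)^2) / 2) - (\<Sum>j<n. a j * b j * r j)"
      unfolding d_def by (simp add: sum_subtractf)
    also have "(\<Sum>j<n. ((a j)^2 + (b j)^2) / 2) = ((\<Sum>j<n. (a j)^2) + (\<Sum>j<n. (b j)^2)) / 2"
      by (simp add: sum_divide_distrib[symmetric] sum.distrib)
    finally show ?thesis .
  qed
  hence "(\<Sum>j<n. d j) = 0" using sa sb s1 by simp
  hence d0: "\<forall>j\<in>{..<n}. d j = 0" using dn by (subst (asm) sum_nonneg_eq_0_iff) auto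
  have "\<forall>j<n. (a j = 0 \<and> b j = 0) \<or>
                 (a j = b j \<and> a j \<noteq> 0 \<and> (\<exists>k::int. mu j - \<theta> = 2 * pi * k)) \<or>
                 (a j = - b j \<and> a j \<noteq> 0 \<and> (\<exists>k::int. mu j - \<theta> = pi * (2 * k + 1)))"
  proof (intro allI impI)
    fix j assume j: "j < n"
    have "(a j)^2 + (b j)^2 = 2 * a j * b j * r j" using d0 j unfolding d_def by auto
    from pair_case[OF this rb]
    show "(a j = 0 \<and> b j = 0) \<or>
                 (a j = b j \<and> a j \<noteq> 0 \<and> (\<exists>k::int. mu j - \<theta> = 2 * pi * k)) \<or>
                 (a j = - b j \<and> a j \<noteq> 0 \<and> (\<exists>k::int. mu j - \<theta> = pi * (2 * k + 1)))"
    proof (elim disjE)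
      assume h: "a j = b j \<and> a j \<noteq> 0 \<and> r j = 1"
      then obtain k :: int where "mu j - \<theta> = of_int k * 2 * pi" unfolding r_def using cos_one_2pi_int by blast
      thus ?thesis using h by (intro disjI2 disjI1) (auto intro!: exI[of _ k])
    next
      assume h: "a j = - b j \<and> a j \<noteq> 0 \<and> r j = -1"
      hence "cos (mu j - \<theta> - pi) = 1" unfolding r_def by (simp add: cos_diff)
      then obtain k :: int where "mu j - \<theta> - pi = of_int k * 2 * pi" using cos_one_2pi_int by blast
      hence "mu j - \<theta> = pi * (2 * k + 1)" by (simp add: algebra_simps)
      thus ?thesis using h by (intro disjI2 disjI2) auto
    qed auto
  qed
  thus ?thesis by blast
qed


lemma sorted_key_desc:
  fixes f :: "nat \<Rightarrow> real" and xs :: "nat list"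
  assumes "i \<le> j" "j < length (sort_key (\<lambda>j. - f j) xs)"
  shows "f (sort_key (\<lambda>j. - f j) xs ! j) \<le> f (sort_key (\<lambda>j. - f j) xs ! i)"
proof -
  have "sorted (map (\<lambda>j. - f j) (sort_key (\<lambda>j. - f j) xs))" by simp
  from sorted_nth_mono[OF this assms(1)] assms show ?thesis by simp
qed

theorem proposition3p2:
  fixes H :: "real mat" and n :: nat and t0 :: real
  assumes "H \<in> carrier_mat n n" and "n \<ge> 2"
    and "transpose_mat H = H"
    and "cmod (mat_exp ((\<i> * complex_of_real t0) \<cdot>\<^sub>m map_mat complex_of_real H) $$ (0, 1)) = 1"
  shows "\<exists>(\<theta>::real) (l::nat) (m::nat) (Q::real mat) (r::nat \<Rightarrow> real) (x::nat \<Rightarrow> real).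
           l \<le> m \<and> m \<le> n \<and>
           Q \<in> carrier_mat n n \<and>
           transpose_mat Q * Q = 1\<^sub>m n \<and> Q * transpose_mat Q = 1\<^sub>m n \<and>
           (\<forall>i<l. \<exists>k::int. k > 0 \<and> even k \<and> r i = real_of_int k) \<and>
           (\<forall>i. l \<le> i \<and> i < m \<longrightarrow> (\<exists>k::int. k > 0 \<and> odd k \<and> r i = real_of_int k)) \<and>
           (\<forall>i j. i \<le> j \<and> j < l \<longrightarrow> r j \<le> r i) \<and>
           (\<forall>i j. l \<le> i \<and> i \<le> j \<and> j < m \<longrightarrow> r j \<le> r i) \<and>
           t0 \<cdot>\<^sub>m H = transpose_mat Q * mat_diag n (\<lambda>i. pi * r i) * Q + \<theta> \<cdot>\<^sub>m 1\<^sub>m n \<and>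
           (\<forall>j<m. x j \<ge> 0) \<and>
           (\<forall>j<m. transpose_mat Q $$ (0, j) = x j) \<and>
           (\<forall>j. m \<le> j \<and> j < n \<longrightarrow> transpose_mat Q $$ (0, j) = 0) \<and>
           (\<forall>j<l. transpose_mat Q $$ (1, j) = x j) \<and>
           (\<forall>j. l \<le> j \<and> j < m \<longrightarrow> transpose_mat Q $$ (1, j) = - x j) \<and>
           (\<forall>j. m \<le> j \<and> j < n \<longrightarrow> transpose_mat Q $$ (1, j) = 0)"
proof -
  note HC = assms(1)
  have MC: "t0 \<cdot>\<^sub>m H \<in> carrier_mat n n" using HC by simp
  have MT: "transpose_mat (t0 \<cdot>\<^sub>m H) = t0 \<cdot>\<^sub>m H" using assms(3) HC by (intro eq_matI) (auto, metis index_transpose_mat(1) carrier_matD)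
  obtain Q0 mu where Q0: "Q0 \<in> carrier_mat n n" "transpose_mat Q0 * Q0 = 1\<^sub>m n" "Q0 * transpose_mat Q0 = 1\<^sub>m n"
    "t0 \<cdot>\<^sub>m H = transpose_mat Q0 * mat_diag n mu * Q0" using spectral[OF MC MT] by blast
  define a where "a j = Q0 $$ (j,0)" for j
  define b where "b j = Q0 $$ (j,1)" for j
  have n0: "0 < n" and n1: "1 < n" using assms(2) by auto
  have sa: "(\<Sum>j<n. (a j)^2) = 1" using TQ_entry[OF Q0(1) n0 n0] Q0(2) n0 unfolding a_def by (simp add: power2_eq_square)
  have sb: "(\<Sum>j<n. (b j)^2) = 1" using TQ_entry[OF Q0(1) n1 n1] Q0(2) n1 unfolding b_def by (simp add: power2_eq_square)
  have ex: "mat_exp ((\<i> * complex_of_real t0) \<cdot>\<^sub>m map_mat complex_of_real H) $$ (0,1) =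
      (\<Sum>j<n. complex_of_real (a j * b j) * exp (\<i> * complex_of_real (mu j)))"
    unfolding a_def b_def by (rule exp_entry[OF HC Q0 n0 n1])
  obtain \<theta> where th: "\<forall>j<n. (a j = 0 \<and> b j = 0) \<or>
                 (a j = b j \<and> a j \<noteq> 0 \<and> (\<exists>k::int. mu j - \<theta> = 2 * pi * k)) \<or>
                 (a j = - b j \<and> a j \<noteq> 0 \<and> (\<exists>k::int. mu j - \<theta> = pi * (2 * k + 1)))"
    using pst_core[OF sa sb] assms(4) unfolding ex by blast
  obtain N :: nat where N: "(\<Sum>j<n. \<bar>mu j\<bar>) + \<bar>\<theta>\<bar> < real N" using reals_Archimedean2 by blast
  define \<theta>' where "\<theta>' = \<theta> - 2 * pi * N"
  define rr where "rr j = (mu j - \<theta>') / pi" for j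
  have rrpos: "rr j > 0" if j: "j < n" for j
  proof -
    have "\<bar>mu j\<bar> \<le> (\<Sum>j<n. \<bar>mu j\<bar>)" using j by (intro member_le_sum) auto
    hence "mu j - \<theta> + real N > 0" using N by linarith
    moreover have "2 * pi * real N \<ge> 1 * real N" using pi_ge_two by (intro mult_right_mono) auto
    ultimately have "mu j - \<theta>' > 0" unfolding \<theta>'_def by linarith
    thus ?thesis unfolding rr_def by simp
  qed
  define G0 where "G0 j = (a j = b j \<and> a j \<noteq> 0)" for j
  define G1 where "G1 j = (a j = - b j \<and> a j \<noteq> 0)" for j
  define G2 where "G2 j = (\<not> G0 j \<and> \<not> G1 j)" for j
  have G0r: "\<exists>k::int. k > 0 \<and> even k \<and> rr j = real_of_int k" if "j < n" "G0 j" for j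
  proof -
    have D: "(a j = 0 \<and> b j = 0) \<or>
                 (a j = b j \<and> a j \<noteq> 0 \<and> (\<exists>k::int. mu j - \<theta> = 2 * pi * k)) \<or>
                 (a j = - b j \<and> a j \<noteq> 0 \<and> (\<exists>k::int. mu j - \<theta> = pi * (2 * k + 1)))"
      using th that(1) by blast
    hence "\<exists>k::int. mu j - \<theta> = 2 * pi * k" using that(2) unfolding G0_def by auto
    then obtain k :: int where k: "mu j - \<theta> = 2 * pi * k" by blast
    have "rr j = real_of_int (2 * (k + int N))" unfolding rr_def \<theta>'_def using k
      by (simp add: field_simps)
    thus ?thesis using rrpos[OF that(1)] by (intro exI[of _ "2 * (k + int N)"]) auto
  qed
  have G1r: "\<exists>k::int. k > 0 \<and> odd k \<and> rr j = real_of_int k" if "j < n" "G1 j" for j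
  proof -
    have D: "(a j = 0 \<and> b j = 0) \<or>
                 (a j = b j \<and> a j \<noteq> 0 \<and> (\<exists>k::int. mu j - \<theta> = 2 * pi * k)) \<or>
                 (a j = - b j \<and> a j \<noteq> 0 \<and> (\<exists>k::int. mu j - \<theta> = pi * (2 * k + 1)))"
      using th that(1) by blast
    hence "\<exists>k::int. mu j - \<theta> = pi * (2 * k + 1)" using that(2) unfolding G1_def by auto
    then obtain k :: int where k: "mu j - \<theta> = pi * (2 * of_int k + 1)" by blast
    have "rr j = real_of_int (2 * (k + int N) + 1)" unfolding rr_def \<theta>'_def using k
      by (simp add: field_simps)
    thus ?thesis using rrpos[OF that(1)] by (intro exI[of _ "2 * (k + int N) + 1"]) auto
  qed
  have G2z: "a j = 0 \<and> b j = 0" if "j < n" "G2 j" for j using th that unfolding G2_def G0_def G1_def by auto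
  define L0 where "L0 = sort_key (\<lambda>j. - rr j) (filter G0 [0..<n])"
  define L1 where "L1 = sort_key (\<lambda>j. - rr j) (filter G1 [0..<n])"
  define L2 where "L2 = filter G2 [0..<n]"
  define L where "L = L0 @ L1 @ L2"
  define l where "l = length L0"
  define m where "m = length L0 + length L1"
  have setL: "set L = {..<n}" unfolding L_def L0_def L1_def L2_def G2_def by auto
  have distL: "distinct L" unfolding L_def L0_def L1_def L2_def G2_def by (auto simp: G0_def G1_def)
  have lenL: "length L = n" using distinct_card[OF distL] setL by simp
  have bij: "bij_betw ((!) L) {..<n} {..<n}" by (rule bij_betw_nth[OF distL]) (use lenL setL in auto)
  have Lnn: "L ! i < n" if "i < n" for i using nth_mem[of i L] that lenL setL by auto
  have lm: "l \<le> m" and mn: "m \<le> n" unfolding l_def m_def using lenL unfolding L_def by auto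
  have mem0: "L ! i = L0 ! i \<and> G0 (L ! i)" if "i < l" for i
  proof -
    have "L ! i = L0 ! i" using that unfolding L_def l_def by (simp add: nth_append)
    moreover have "L0 ! i \<in> set L0" using that unfolding l_def by simp
    ultimately show ?thesis unfolding L0_def by simp
  qed
  have mem1: "L ! i = L1 ! (i - l) \<and> G1 (L ! i)" if "l \<le> i" "i < m" for i
  proof -
    have "L ! i = L1 ! (i - l)" using that unfolding L_def l_def m_def by (auto simp: nth_append)
    moreover have "L1 ! (i - l) \<in> set L1" using that unfolding l_def m_def by simp
    ultimately show ?thesis unfolding L1_def by simp
  qed
  have mem2: "G2 (L ! i)" if "m \<le> i" "i < n" for i
  proof -
    have "L ! i = L2 ! (i - m)" using that unfolding L_def m_def by (auto simp: nth_append)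
    moreover have "i - m < length L2" using that lenL unfolding L_def m_def by simp
    hence "L2 ! (i - m) \<in> set L2" by simp
    ultimately show ?thesis unfolding L2_def by simp
  qed
  define s where "s j = (if a j \<ge> 0 then 1 else (-1::real))" for j
  have ss: "s j * s j = 1" for j unfolding s_def by auto
  define Qn where "Qn = mat n n (\<lambda>(i,c). s (L ! i) * Q0 $$ (L ! i, c))"
  define r where "r i = rr (L ! i)" for i
  define x where "x i = \<bar>a (L ! i)\<bar>" for i
  have QnC: "Qn \<in> carrier_mat n n" unfolding Qn_def by simp
  have Qne: "Qn $$ (i,c) = s (L ! i) * Q0 $$ (L ! i, c)" if "i < n" "c < n" for i c
    unfolding Qn_def using that by simp
  have reidx: "(\<Sum>i<n. g (L ! i)) = (\<Sum>j<n. g j)" for g :: "nat \<Rightarrow> real"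
    by (rule sum.reindex_bij_betw[OF bij])
  have o1: "transpose_mat Qn * Qn = 1\<^sub>m n"
  proof (rule eq_matI)
    fix c d assume "c < dim_row (1\<^sub>m n)" "d < dim_col (1\<^sub>m n)"
    hence c: "c < n" and d: "d < n" by auto
    have "(transpose_mat Qn * Qn) $$ (c,d) = (\<Sum>i<n. Qn $$ (i,c) * Qn $$ (i,d))" by (rule TQ_entry[OF QnC c d])
    also have "\<dots> = (\<Sum>i<n. Q0 $$ (L ! i, c) * Q0 $$ (L ! i, d))"
      by (intro sum.cong refl) (simp add: Qne c d, metis ss mult.commute mult.left_commute mult_1)
    also have "\<dots> = (\<Sum>j<n. Q0 $$ (j, c) * Q0 $$ (j, d))" by (rule reidx)
    also have "\<dots> = (transpose_mat Q0 * Q0) $$ (c,d)" by (rule TQ_entry[OF Q0(1) c d, symmetric])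
    finally show "(transpose_mat Qn * Qn) $$ (c,d) = 1\<^sub>m n $$ (c,d)" using Q0(2) by simp
  qed (use QnC in auto)
  have o2: "Qn * transpose_mat Qn = 1\<^sub>m n"
  proof (rule eq_matI)
    fix i i' assume "i < dim_row (1\<^sub>m n)" "i' < dim_col (1\<^sub>m n)"
    hence i: "i < n" and i': "i' < n" by auto
    have "(Qn * transpose_mat Qn) $$ (i,i') = (\<Sum>c<n. Qn $$ (i,c) * Qn $$ (i',c))" by (rule QT_entry[OF QnC i i'])
    also have "\<dots> = s (L ! i) * s (L ! i') * (\<Sum>c<n. Q0 $$ (L ! i, c) * Q0 $$ (L ! i', c))"
      unfolding sum_distrib_left by (intro sum.cong refl) (simp add: Qne i i' ac_simps)
    also have "(\<Sum>c<n. Q0 $$ (L ! i, c) * Q0 $$ (L ! i', c)) = (Q0 * transpose_mat Q0) $$ (L ! i, L ! i')"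
      by (rule QT_entry[OF Q0(1) Lnn[OF i] Lnn[OF i'], symmetric])
    also have "\<dots> = (if i = i' then 1 else 0)" using Q0(3) Lnn[OF i] Lnn[OF i'] nth_eq_iff_index_eq[OF distL, of i i'] i i' lenL by simp
    finally show "(Qn * transpose_mat Qn) $$ (i,i') = 1\<^sub>m n $$ (i,i')" using i i' ss by auto
  qed (use QnC in auto)
  have prr: "pi * rr j = mu j - \<theta>'" for j unfolding rr_def by simp
  have f_eq: "t0 \<cdot>\<^sub>m H = transpose_mat Qn * mat_diag n (\<lambda>i. pi * r i) * Qn + \<theta>' \<cdot>\<^sub>m 1\<^sub>m n"
  proof (rule eq_matI)
    fix c d assume "c < dim_row (transpose_mat Qn * mat_diag n (\<lambda>i. pi * r i) * Qn + \<theta>' \<cdot>\<^sub>m 1\<^sub>m n)"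
      "d < dim_col (transpose_mat Qn * mat_diag n (\<lambda>i. pi * r i) * Qn + \<theta>' \<cdot>\<^sub>m 1\<^sub>m n)"
    hence c: "c < n" and d: "d < n" by auto
    have "(transpose_mat Qn * mat_diag n (\<lambda>i. pi * r i) * Qn) $$ (c,d) = (\<Sum>i<n. Qn $$ (i,c) * (pi * r i) * Qn $$ (i,d))"
      by (rule sandwich_entry[OF QnC c d])
    also have "\<dots> = (\<Sum>i<n. Q0 $$ (L ! i, c) * (mu (L ! i) - \<theta>') * Q0 $$ (L ! i, d))"
    proof (intro sum.cong refl)
      fix i assume "i \<in> {..<n}"
      hence i: "i < n" by simp
      have "Qn $$ (i,c) * (pi * r i) * Qn $$ (i,d) = (s (L ! i) * s (L ! i)) * (Q0 $$ (L ! i, c) * (pi * rr (L ! i)) * Q0 $$ (L ! i, d))"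
        unfolding r_def using i c d by (simp add: Qne ac_simps)
      thus "Qn $$ (i,c) * (pi * r i) * Qn $$ (i,d) = Q0 $$ (L ! i, c) * (mu (L ! i) - \<theta>') * Q0 $$ (L ! i, d)"
        by (simp only: ss prr mult_1)
    qed
    also have "\<dots> = (\<Sum>j<n. Q0 $$ (j, c) * (mu j - \<theta>') * Q0 $$ (j, d))"
      by (rule reidx[of "\<lambda>j. Q0 $$ (j, c) * (mu j - \<theta>') * Q0 $$ (j, d)"])
    also have "\<dots> = (\<Sum>j<n. Q0 $$ (j, c) * mu j * Q0 $$ (j, d)) - \<theta>' * (\<Sum>j<n. Q0 $$ (j, c) * Q0 $$ (j, d))"
      by (simp add: sum_distrib_left sum_subtractf[symmetric] algebra_simps)
    also have "(\<Sum>j<n. Q0 $$ (j, c) * mu j * Q0 $$ (j, d)) = (t0 \<cdot>\<^sub>m H) $$ (c,d)"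
      unfolding Q0(4) by (rule sandwich_entry[OF Q0(1) c d, symmetric])
    also have "(\<Sum>j<n. Q0 $$ (j, c) * Q0 $$ (j, d)) = (if c = d then 1 else 0)"
      using TQ_entry[OF Q0(1) c d] Q0(2) c d by simp
    finally show "(t0 \<cdot>\<^sub>m H) $$ (c,d) = (transpose_mat Qn * mat_diag n (\<lambda>i. pi * r i) * Qn + \<theta>' \<cdot>\<^sub>m 1\<^sub>m n) $$ (c,d)"
      using c d by simp
  qed (use QnC HC in auto)
  have f_int0: "\<forall>i<l. \<exists>k::int. k > 0 \<and> even k \<and> r i = real_of_int k"
    using mem0 G0r Lnn lm mn unfolding r_def by (meson le_trans less_le_trans)
  have f_int1: "\<forall>i. l \<le> i \<and> i < m \<longrightarrow> (\<exists>k::int. k > 0 \<and> odd k \<and> r i = real_of_int k)"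
    using mem1 G1r Lnn mn unfolding r_def by (meson le_trans less_le_trans)
  have f_ord0: "\<forall>i j. i \<le> j \<and> j < l \<longrightarrow> r j \<le> r i"
  proof (intro allI impI)
    fix i j assume ij: "i \<le> j \<and> j < l"
    hence "r i = rr (L0 ! i)" "r j = rr (L0 ! j)" using mem0[of i] mem0[of j] unfolding r_def by auto
    moreover have "rr (L0 ! j) \<le> rr (L0 ! i)" unfolding L0_def
      by (rule sorted_key_desc) (use ij in \<open>auto simp: l_def L0_def\<close>)
    ultimately show "r j \<le> r i" by simp
  qed
  have f_ord1: "\<forall>i j. l \<le> i \<and> i \<le> j \<and> j < m \<longrightarrow> r j \<le> r i"
  proof (intro allI impI)
    fix i j assume ij: "l \<le> i \<and> i \<le> j \<and> j < m"
    hence "r i = rr (L1 ! (i - l))" "r j = rr (L1 ! (j - l))" using mem1[of i] mem1[of j] unfolding r_def by auto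
    moreover have "rr (L1 ! (j - l)) \<le> rr (L1 ! (i - l))" unfolding L1_def
      by (rule sorted_key_desc) (use ij in \<open>auto simp: l_def m_def L1_def\<close>)
    ultimately show "r j \<le> r i" by simp
  qed
  have sa_abs: "s j * a j = \<bar>a j\<bar>" for j unfolding s_def by auto
  have TQ: "transpose_mat Qn $$ (k, j) = s (L ! j) * Q0 $$ (L ! j, k)" if "j < n" "k < n" for j k
    using that QnC by (simp add: Qne)
  have f_x: "\<forall>j<m. x j \<ge> 0" unfolding x_def by simp
  have f_T0: "\<forall>j<m. transpose_mat Qn $$ (0, j) = x j"
    using TQ[OF _ n0] mn sa_abs unfolding x_def a_def by auto
  have f_T0': "\<forall>j. m \<le> j \<and> j < n \<longrightarrow> transpose_mat Qn $$ (0, j) = 0"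
    using TQ[OF _ n0] mem2 G2z Lnn unfolding a_def by auto
  have f_T1: "\<forall>j<l. transpose_mat Qn $$ (1, j) = x j"
  proof (intro allI impI)
    fix j assume j: "j < l"
    hence jn: "j < n" using lm mn by simp
    have "b (L ! j) = a (L ! j)" using mem0[OF j] unfolding G0_def by metis
    thus "transpose_mat Qn $$ (1, j) = x j" using TQ[OF jn n1] sa_abs unfolding x_def b_def by simp
  qed
  have f_T1': "\<forall>j. l \<le> j \<and> j < m \<longrightarrow> transpose_mat Qn $$ (1, j) = - x j"
  proof (intro allI impI)
    fix j assume j: "l \<le> j \<and> j < m"
    hence jn: "j < n" using mn by simp
    have "b (L ! j) = - a (L ! j)" using mem1[of j] j unfolding G1_def by (metis minus_minus)
    thus "transpose_mat Qn $$ (1, j) = - x j" using TQ[OF jn n1] sa_abs[of "L ! j"] unfolding x_def b_def by simp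
  qed
  have f_T1'': "\<forall>j. m \<le> j \<and> j < n \<longrightarrow> transpose_mat Qn $$ (1, j) = 0"
    using TQ[OF _ n1] mem2 G2z Lnn unfolding b_def by auto
  show ?thesis
    apply (rule exI[of _ \<theta>'], rule exI[of _ l], rule exI[of _ m], rule exI[of _ Qn], rule exI[of _ r], rule exI[of _ x])
    using lm mn QnC o1 o2 f_int0 f_int1 f_ord0 f_ord1 f_eq f_x f_T0 f_T0' f_T1 f_T1' f_T1'' by blast
qed

end
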